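(* Among the exposure metrics $ED, ER, DTD, DTR, DID, DIR$, exactly $ED$, $DTD$ and $DID$ satisfy optimality of random rankings: for every population $\mathcal D$ with uniform relevance, if $r$ is drawn uniformly at random from the set of all rankings of the full population $\mathcal D$, then $\mathbb E[m(r)]=v_{\mathrm{opt}}(m)$. In particular $ER$, $DTR$ and $DIR$ do not satisfy this property.
   Context: A population is a finite set $\mathcal{D}$ of candidates partitioned into two nonempty groups, a non-protected group $G_0$ and a protected group $G_1$; each candidate $d$ has a relevance score $y(d)\in\mathbb R$; uniform relevance means $y(d)=1$ for all $d$. For a candidate set $D\subseteq\mathcal D$ with $n=|D|$, a ranking is a bijection $r:\{1,\dots,n\}\to D$ and $r^{-1}(d)$ is the position of $d$. Position bias $b(k)=1/\log_2(k+1)$. For $G\in\{G_0,G_1\}$: $\mathrm{Exposure}(G|r)=\frac{1}{|G|}\sum_{d\in G\cap D} b(r^{-1}(d))$, $Y(G)=\frac1{|G|}\sum_{d\in G}y(d)$, $CTR(G|r)=\frac1{|G|}\sum_{d\in G\cap D} b(r^{-1}(d))\,y(d)$. $ED(r)=\mathrm{Exposure}(G_1|r)-\mathrm{Exposure}(G_0|r)$, $ER(r)=\mathrm{Exposure}(G_1|r)/\mathrm{Exposure}(G_0|r)$, $DTD(r)=\frac{\mathrm{Exposure}(G_1|r)}{Y(G_1)}-\frac{\mathrm{Exposure}(G_0|r)}{Y(G_0)}$, $DTR(r)=\frac{\mathrm{Exposure}(G_1|r)}{\mathrm{Exposure}(G_0|r)}\cdot\frac{Y(G_0)}{Y(G_1)}$,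 $DID(r)=\frac{CTR(G_1|r)}{Y(G_1)}-\frac{CTR(G_0|r)}{Y(G_0)}$, $DIR(r)=\frac{CTR(G_1|r)}{CTR(G_0|r)}\cdot\frac{Y(G_0)}{Y(G_1)}$. Optimal values: $v_{\mathrm{opt}}=0$ for $ED,DTD,DID$ and $v_{\mathrm{opt}}=1$ for $ER,DTR,DIR$. *)

theory Defs
  imports "HOL-Library.FuncSet" Complex_Main
begin

type_synonym 'a ranking = "nat \<Rightarrow> 'a"

definition bias :: "nat \<Rightarrow> real" where
  "bias k = 1 / log 2 (real k + 1)"

definition rankings :: "'a set \<Rightarrow> 'a ranking set" where
  "rankings D = {r \<in> {1..card D} \<rightarrow>\<^sub>E D. bij_betw r {1..card D} D}"

definition pos :: "'a set \<Rightarrow> 'a ranking \<Rightarrow> 'a \<Rightarrow> nat" where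
  "pos D r d = inv_into {1..card D} r d"

definition exposure :: "'a set \<Rightarrow> 'a set \<Rightarrow> 'a ranking \<Rightarrow> real" where
  "exposure G D r = (\<Sum>d\<in>G \<inter> D. bias (pos D r d)) / real (card G)"

definition Yavg :: "'a set \<Rightarrow> ('a \<Rightarrow> real) \<Rightarrow> real" where
  "Yavg G y = (\<Sum>d\<in>G. y d) / real (card G)"

definition CTR :: "'a set \<Rightarrow> ('a \<Rightarrow> real) \<Rightarrow> 'a set \<Rightarrow> 'a ranking \<Rightarrow> real" where
  "CTR G y D r = (\<Sum>d\<in>G \<inter> D. bias (pos D r d) * y d) / real (card G)"

text \<open>A metric takes G0 (non-protected), G1 (protected), relevance y, candidate set D and ranking r.\<close>
type_synonym 'a metric = "'a set \<Rightarrow> 'a set \<Rightarrow> ('a \<Rightarrow> real) \<Rightarrow> 'a set \<Rightarrow> 'a ranking \<Rightarrow> real"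

definition ED :: "'a metric" where
  "ED G0 G1 y D r = exposure G1 D r - exposure G0 D r"
definition ER :: "'a metric" where
  "ER G0 G1 y D r = exposure G1 D r / exposure G0 D r"
definition DTD :: "'a metric" where
  "DTD G0 G1 y D r = exposure G1 D r / Yavg G1 y - exposure G0 D r / Yavg G0 y"
definition DTR :: "'a metric" where
  "DTR G0 G1 y D r = (exposure G1 D r / exposure G0 D r) * (Yavg G0 y / Yavg G1 y)"
definition DID :: "'a metric" where
  "DID G0 G1 y D r = CTR G1 y D r / Yavg G1 y - CTR G0 y D r / Yavg G0 y"
definition DIR :: "'a metric" where
  "DIR G0 G1 y D r = (CTR G1 y D r / CTR G0 y D r) * (Yavg G0 y / Yavg G1 y)"

definition optimal_random :: "'a metric \<Rightarrow> real \<Rightarrow> bool" where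
  "optimal_random m v \<longleftrightarrow>
     (\<forall>G0 G1 y. finite G0 \<and> finite G1 \<and> G0 \<noteq> {} \<and> G1 \<noteq> {} \<and> G0 \<inter> G1 = {} \<and>
        (\<forall>d \<in> G0 \<union> G1. y d = 1) \<longrightarrow>
        (\<Sum>r\<in>rankings (G0 \<union> G1). m G0 G1 y (G0 \<union> G1) r) / real (card (rankings (G0 \<union> G1))) = v)"

end

theory Submission
  imports Defs
begin

definition sw :: "'a \<Rightarrow> 'a \<Rightarrow> 'a \<Rightarrow> 'a" where
  "sw a b x = (if x = a then b else if x = b then a else x)"

lemma sw_inv[simp]: "sw a b (sw a b x) = x"
  by (auto simp: sw_def)

lemma sw_in: "a \<in> D \<Longrightarrow> b \<in> D \<Longrightarrow> x \<in> D \<Longrightarrow> sw a b x \<in> D"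
  by (auto simp: sw_def)

lemma sw_bij: "a \<in> D \<Longrightarrow> b \<in> D \<Longrightarrow> bij_betw (sw a b) D D"
  by (rule bij_betwI[where g="sw a b"]) (auto simp: sw_in)

lemma rank_pos:
  assumes "r \<in> rankings D" "d \<in> D"
  shows "pos D r d \<in> {1..card D}" "r (pos D r d) = d"
proof -
  have b: "bij_betw r {1..card D} D" using assms by (simp add: rankings_def)
  then have "d \<in> r ` {1..card D}" using assms by (simp add: bij_betw_def)
  then show "pos D r d \<in> {1..card D}" "r (pos D r d) = d"
    unfolding pos_def by (simp_all only: inv_into_into f_inv_into_f)
qed

lemma swr_in:
  assumes "r \<in> rankings D" "a \<in> D" "b \<in> D"
  shows "restrict (sw a b \<circ> r) {1..card D} \<in> rankings D"
proof -
  have b: "bij_betw r {1..card D} D" using assms by (simp add: rankings_def)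
  have "bij_betw (sw a b \<circ> r) {1..card D} D"
    using bij_betw_trans[OF b sw_bij[OF assms(2,3)]] .
  moreover have "(sw a b \<circ> r) x \<in> D" if "x \<in> {1..card D}" for x
    using b that assms by (auto simp: bij_betw_def intro!: sw_in)
  ultimately show ?thesis
    by (auto simp: rankings_def bij_betw_restrict_eq)
qed

lemma swr_inv:
  assumes "r \<in> rankings D"
  shows "restrict (sw a b \<circ> restrict (sw a b \<circ> r) {1..card D}) {1..card D} = r"
proof -
  have "r \<in> extensional {1..card D}" using assms unfolding rankings_def by (simp add: PiE_iff)
  then show ?thesis by (auto simp: fun_eq_iff restrict_def extensional_def)
qed

lemma swr_pos:
  assumes "r \<in> rankings D" "a \<in> D" "b \<in> D"
  shows "pos D (restrict (sw a b \<circ> r) {1..card D}) b = pos D r a"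
proof -
  have b: "bij_betw (restrict (sw a b \<circ> r) {1..card D}) {1..card D} D"
    using swr_in[OF assms] by (simp add: rankings_def)
  show ?thesis unfolding pos_def[of D "restrict _ _"]
    apply (rule inv_into_f_eq)
    using b rank_pos[OF assms(1,2)] by (auto simp: bij_betw_def sw_def)
qed

lemma sum_pos_indep:
  assumes "a \<in> D" "b \<in> D"
  shows "(\<Sum>r\<in>rankings D. f (pos D r a)) = (\<Sum>r\<in>rankings D. f (pos D r b))"
  apply (rule sum.reindex_bij_witness[where i="\<lambda>r. restrict (sw a b \<circ> r) {1..card D}"
        and j="\<lambda>r. restrict (sw a b \<circ> r) {1..card D}"])
  using assms by (simp_all only: swr_inv swr_in swr_pos)

lemma sum_exposure:
  assumes "G \<subseteq> D" "G \<noteq> {}" "finite G" "d0 \<in> D"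
  shows "(\<Sum>r\<in>rankings D. exposure G D r) = (\<Sum>r\<in>rankings D. bias (pos D r d0))"
proof -
  have "(\<Sum>r\<in>rankings D. exposure G D r)
      = (\<Sum>d\<in>G. \<Sum>r\<in>rankings D. bias (pos D r d)) / real (card G)"
    unfolding exposure_def using assms(1)
    by (simp add: sum_divide_distrib[symmetric] Int_absorb2 sum.swap[of _ G])
  also have "\<dots> = (\<Sum>d\<in>G. \<Sum>r\<in>rankings D. bias (pos D r d0)) / real (card G)"
    using assms by (intro arg_cong2[where f="(/)"] sum.cong refl sum_pos_indep) auto
  also have "\<dots> = (\<Sum>r\<in>rankings D. bias (pos D r d0))"
    using assms by simp
  finally show ?thesis .
qed

lemma ED_opt: "optimal_random ED 0"
  unfolding optimal_random_def
proof (intro allI impI)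
  fix G0 G1 :: "'a set" and y :: "'a \<Rightarrow> real"
  assume h: "finite G0 \<and> finite G1 \<and> G0 \<noteq> {} \<and> G1 \<noteq> {} \<and> G0 \<inter> G1 = {} \<and> (\<forall>d\<in>G0 \<union> G1. y d = 1)"
  then obtain d0 where d0: "d0 \<in> G0 \<union> G1" by blast
  have "(\<Sum>r\<in>rankings (G0 \<union> G1). ED G0 G1 y (G0 \<union> G1) r) = 0"
    unfolding ED_def sum_subtractf
    using sum_exposure[of G0 "G0 \<union> G1" d0] sum_exposure[of G1 "G0 \<union> G1" d0] h d0 by simp
  then show "(\<Sum>r\<in>rankings (G0 \<union> G1). ED G0 G1 y (G0 \<union> G1) r) / real (card (rankings (G0 \<union> G1))) = 0"
    by simp
qed

lemma Yavg1: "finite G \<Longrightarrow> G \<noteq> {} \<Longrightarrow> (\<forall>d\<in>G. y d = 1) \<Longrightarrow> Yavg G y = 1"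
  by (simp add: Yavg_def)

lemma CTR1: "(\<forall>d\<in>G \<inter> D. y d = 1) \<Longrightarrow> CTR G y D r = exposure G D r"
  by (simp add: CTR_def exposure_def)

lemma DTD_opt: "optimal_random DTD 0"
  unfolding optimal_random_def
proof (intro allI impI)
  fix G0 G1 :: "'a set" and y :: "'a \<Rightarrow> real"
  assume h: "finite G0 \<and> finite G1 \<and> G0 \<noteq> {} \<and> G1 \<noteq> {} \<and> G0 \<inter> G1 = {} \<and> (\<forall>d\<in>G0 \<union> G1. y d = 1)"
  have "(\<Sum>r\<in>rankings (G0 \<union> G1). DTD G0 G1 y (G0 \<union> G1) r) = (\<Sum>r\<in>rankings (G0 \<union> G1). ED G0 G1 y (G0 \<union> G1) r)"
    using h by (intro sum.cong refl) (auto simp: DTD_def ED_def Yavg1)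
  then show "(\<Sum>r\<in>rankings (G0 \<union> G1). DTD G0 G1 y (G0 \<union> G1) r) / real (card (rankings (G0 \<union> G1))) = 0"
    using ED_opt[unfolded optimal_random_def, rule_format, of G0 G1 y] h by simp
qed

lemma DID_opt: "optimal_random DID 0"
  unfolding optimal_random_def
proof (intro allI impI)
  fix G0 G1 :: "'a set" and y :: "'a \<Rightarrow> real"
  assume h: "finite G0 \<and> finite G1 \<and> G0 \<noteq> {} \<and> G1 \<noteq> {} \<and> G0 \<inter> G1 = {} \<and> (\<forall>d\<in>G0 \<union> G1. y d = 1)"
  have "(\<Sum>r\<in>rankings (G0 \<union> G1). DID G0 G1 y (G0 \<union> G1) r) = (\<Sum>r\<in>rankings (G0 \<union> G1). ED G0 G1 y (G0 \<union> G1) r)"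
    using h by (intro sum.cong refl) (auto simp: DID_def ED_def Yavg1 CTR1)
  then show "(\<Sum>r\<in>rankings (G0 \<union> G1). DID G0 G1 y (G0 \<union> G1) r) / real (card (rankings (G0 \<union> G1))) = 0"
    using ED_opt[unfolded optimal_random_def, rule_format, of G0 G1 y] h by simp
qed

definition r1 :: "nat ranking" where "r1 = restrict (\<lambda>k. if k = 1 then 0 else 1) {1..2}"
definition r2 :: "nat ranking" where "r2 = restrict (\<lambda>k. if k = 1 then 1 else 0) {1..2}"

lemma two_set: "{1..2::nat} = {1,2}" by auto
lemma card2: "card {0::nat,1} = 2" by simp

lemma rankings01: "rankings {0::nat,1} = {r1, r2}"
proof
  show "{r1, r2} \<subseteq> rankings {0::nat,1}"
  proof -
    have a: "r1 1 = 0" "r1 2 = 1" "r2 1 = 1" "r2 2 = 0" by (simp_all add: r1_def r2_def)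
    have "r1 \<in> {1..2} \<rightarrow>\<^sub>E {0::nat,1}" "r2 \<in> {1..2} \<rightarrow>\<^sub>E {0::nat,1}"
      by (auto simp: r1_def r2_def)
    moreover have "bij_betw r1 {1,2} {0,1}" "bij_betw r2 {1,2} {0,1}"
      unfolding bij_betw_def inj_on_def using a by auto
    moreover have c: "card {0::nat,1} = 2" by simp
    ultimately show ?thesis unfolding rankings_def c two_set by simp
  qed
  show "rankings {0::nat,1} \<subseteq> {r1, r2}"
  proof
    fix r assume "r \<in> rankings {0::nat,1}"
    then have e: "r \<in> {1,2} \<rightarrow>\<^sub>E {0::nat,1}" and b: "bij_betw r {1,2} {0::nat,1}"
      unfolding rankings_def card2 two_set by auto
    have x: "r k = undefined" if "k \<notin> {1,2}" for k using e that by (auto simp: PiE_iff extensional_def)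
    have "r 1 \<in> {0,1}" "r 2 \<in> {0,1}" using e by auto
    moreover have "r 1 \<noteq> r 2" using b by (auto simp: bij_betw_def inj_on_def)
    ultimately consider "r 1 = 0" "r 2 = 1" | "r 1 = 1" "r 2 = 0" by fastforce
    then show "r \<in> {r1, r2}"
    proof cases
      case 1 then have "r = r1" unfolding r1_def two_set using x by (auto simp: fun_eq_iff)
      then show ?thesis by simp
    next
      case 2 then have "r = r2" unfolding r2_def two_set using x by (auto simp: fun_eq_iff)
      then show ?thesis by simp
    qed
  qed
qed

lemma r12: "r1 \<noteq> r2"
proof
  assume "r1 = r2" then have "r1 1 = r2 1" by simp
  then show False by (simp add: r1_def r2_def)
qed

lemma card01: "card (rankings {0::nat,1}) = 2"
proof -
  note r12
  then show ?thesis unfolding rankings01 by simp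
qed

lemma posv: "pos {0::nat,1} r1 0 = 1" "pos {0::nat,1} r1 1 = 2"
  "pos {0::nat,1} r2 0 = 2" "pos {0::nat,1} r2 1 = 1"
  unfolding pos_def
  by (rule inv_into_f_eq; auto simp: r1_def r2_def inj_on_def)+

lemma bias1: "bias 1 = 1" by (simp add: bias_def)

lemma bias2: "bias 2 > 0" "bias 2 \<noteq> 1"
proof -
  have "log 2 3 > log 2 (2::real)" by (subst log_less_cancel_iff) auto
  then have "log 2 3 > 1" by simp
  then have "log 2 3 \<noteq> 1" "log 2 3 > 0" by linarith+
  moreover have "bias 2 = 1 / log 2 3" unfolding bias_def by simp
  ultimately show "bias 2 > 0" "bias 2 \<noteq> 1" by (auto simp: bias_def)
qed

lemma expo: "exposure {1} {0,1} r1 = bias 2" "exposure {0} {0,1} r1 = 1"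
  "exposure {1} {0::nat,1} r2 = 1" "exposure {0} {0::nat,1} r2 = bias 2"
  by (auto simp: exposure_def posv posv[simplified] bias1 bias1[simplified])

lemma not_opt:
  fixes m :: "nat metric"
  assumes "m {0} {1} (\<lambda>_. 1) {0,1} r1 = bias 2" "m {0} {1} (\<lambda>_. 1) {0,1} r2 = 1 / bias 2"
  shows "\<not> optimal_random m 1"
proof
  assume "optimal_random m 1"
  have u: "{0::nat} \<union> {1} = {0,1}" by auto
  have "(\<Sum>r\<in>rankings ({0} \<union> {1}). m {0} {1} (\<lambda>_. 1) ({0} \<union> {1}) r) / real (card (rankings ({0::nat} \<union> {1}))) = 1"
    by (rule \<open>optimal_random m 1\<close>[unfolded optimal_random_def, rule_format]) auto
  then have "(\<Sum>r\<in>rankings {0,1}. m {0} {1} (\<lambda>_. 1) {0,1} r) / real (card (rankings {0::nat,1})) = 1"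
    unfolding u .
  then have "(\<Sum>r\<in>rankings {0,1}. m {0} {1} (\<lambda>_. 1) {0,1} r) / real 2 = 1"
    unfolding card01 .
  then have "(\<Sum>r\<in>{r1,r2}. m {0} {1} (\<lambda>_. 1) {0,1} r) / real 2 = 1"
    unfolding rankings01 .
  then have "(bias 2 + 1 / bias 2) / 2 = 1"
    using assms r12 by simp
  then have "bias 2 * bias 2 + 1 = 2 * bias 2" using bias2 by (simp add: field_simps)
  then have "(bias 2 - 1)^2 = 0" by (simp add: power2_eq_square algebra_simps)
  then show False using bias2 by simp
qed

lemma Yc: "Yavg {a} (\<lambda>_. 1) = 1" by (simp add: Yavg_def)
lemma Cc: "CTR G (\<lambda>_. 1) D r = exposure G D r" by (simp add: CTR_def exposure_def)

theorem theorem7: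
  shows "optimal_random (ED :: 'a metric) 0 \<and> optimal_random (DTD :: 'a metric) 0 \<and>
         optimal_random (DID :: 'a metric) 0 \<and>
         \<not> optimal_random (ER :: nat metric) 1 \<and> \<not> optimal_random (DTR :: nat metric) 1 \<and>
         \<not> optimal_random (DIR :: nat metric) 1"
proof -
  have a: "\<not> optimal_random (ER :: nat metric) 1"
    by (rule not_opt; unfold ER_def expo; simp)
  have b: "\<not> optimal_random (DTR :: nat metric) 1"
    by (rule not_opt; unfold DTR_def expo Yc; simp)
  have c: "\<not> optimal_random (DIR :: nat metric) 1"
    by (rule not_opt; unfold DIR_def Cc expo Yc; simp)
  show ?thesis using ED_opt DTD_opt DID_opt a b c by blast
qed

end
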